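(* If $f:S\to T$ and $g:T\to U$ are non-degenerate nested tuple morphisms, then $L_{g\circ f}=L_g\circ L_f$.
   Context: A nested tuple (of positive integers) is either a positive integer (depth $0$) or a finite tuple $(X_1,\dots,X_r)$ of nested tuples (depth $>0$, rank $r$, modes $X_i$). Its flattening $X^\flat$ is the tuple of integer leaves read left to right; $\mathrm{len}(X)$ is its length, $\mathrm{entry}_i(X)$ its $i$-th entry, $\mathrm{size}(X)$ the product of its entries. Congruent nested tuples have the same nesting pattern. $\langle n\rangle_*=\{*,1,\dots,n\}$. A layout is $L=S:D$ with $S,D$ congruent nested tuples ($S$ positive, $D$ nonnegative); $L^\flat=S^\flat:D^\flat$. For a flat layout $(s_1,\dots,s_m):(d_1,\dots,d_m)$ its layout function $\Phi:[0,\prod s_i)\to\mathbb{Z}$ is $\Phi(x)=\sum_i x_id_i$ with $x_i=\lfloor x/(s_1\cdots s_{i-1})\rfloor \bmod s_i$; for a layout, $\Phi_L=\Phi_{L^\flat}$ and $\mathrm{size}(L)=\mathrm{size}(S)$. A flat layout is coalesced if no $s_i=1$ and $s_id_i\ne d_{i+1}$ for $1\le i<m$. A layout $L$ is coalesced if $L=1:0$, or $L$ has depth $0$ with shape $>1$, or $L$ has depth $1$, rank $>1$ and is a coalesced flat layout. A nested tuple $X'$ refines $X$ if either $X$ is an integer equal to $\mathrm{size}(X')$, or both have depth $>0$, the same rank, and each mode of $X'$ refines the corresponding mode of $X$. If $S'$ refines $S$ then $S'$ is obtained from $S$ by replacing its $i$-th leaf by a nested tuple $S'_i$ of size $\mathrm{entry}_i(S)$;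 for a layout $L=S':D$ its $i$-th relative mode is $S'_i:D_i$ with $D_i$ the corresponding part of $D$. $L$ is coalesced over $S$ if every relative mode is coalesced. For layouts $A,B$, the composite $B\circ A$ is the unique layout $C$ such that $\mathrm{shape}(C)$ refines $\mathrm{shape}(A)$, $C$ is coalesced over $\mathrm{shape}(A)$, the image of $\Phi_A$ lies in $[0,\mathrm{size}(B))$, and $\Phi_C=\Phi_B\circ\Phi_A$. A nested tuple morphism $f:S\to T$ is given by a pointed map $\alpha:\langle\mathrm{len}(S)\rangle_*\to\langle\mathrm{len}(T)\rangle_*$ with each $j\ne*$ having at most one preimage and $\mathrm{entry}_i(S)=\mathrm{entry}_{\alpha(i)}(T)$ whenever $\alpha(i)\ne*$. Composition of $f$ (over $\alpha$) and $g$ (over $\beta$) lies over $\beta\circ\alpha$. With $T^\flat=(t_1,\dots,t_n)$, $L_f$ has shape $S$ and stride congruent to $S$ with $i$-th flattened entry $0$ if $\alpha(i)=*$, else $\prod_{j<\alpha(i)}t_j$. $f$ is non-degenerate if $\mathrm{entry}_i(S)=1$ implies $\alpha(i)=*$. *)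

theory Defs
  imports Main
begin

datatype 'a nt = Leaf 'a | Node "'a nt list"

fun flat :: "'a nt \<Rightarrow> 'a list" where
  "flat (Leaf a) = [a]"
| "flat (Node xs) = concat (map flat xs)"

definition pos_nt :: "nat nt \<Rightarrow> bool" where
  "pos_nt X \<longleftrightarrow> (\<forall>a \<in> set (flat X). 0 < a)"

definition len :: "'a nt \<Rightarrow> nat" where
  "len X = length (flat X)"

text \<open>1-based entries.\<close>
definition entry :: "nat \<Rightarrow> 'a nt \<Rightarrow> 'a" where
  "entry i X = flat X ! (i - 1)"

definition nt_size :: "nat nt \<Rightarrow> nat" where
  "nt_size X = prod_list (flat X)"

text \<open>A layout S:D with congruent S, D is represented as a single nested tuple of
  pairs (shape entry, stride entry); congruence is then automatic.\<close>
type_synonym layout = "(nat \<times> nat) nt"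

definition shape :: "layout \<Rightarrow> nat nt" where
  "shape L = map_nt fst L"

definition stride :: "layout \<Rightarrow> nat nt" where
  "stride L = map_nt snd L"

definition is_layout :: "layout \<Rightarrow> bool" where
  "is_layout L \<longleftrightarrow> pos_nt (shape L)"

definition lsize :: "layout \<Rightarrow> nat" where
  "lsize L = nt_size (shape L)"

definition flat_phi :: "(nat \<times> nat) list \<Rightarrow> nat \<Rightarrow> nat" where
  "flat_phi sd x =
     (\<Sum>i<length sd. (x div prod_list (take i (map fst sd)) mod fst (sd ! i)) * snd (sd ! i))"

definition phi :: "layout \<Rightarrow> nat \<Rightarrow> nat" where
  "phi L x = flat_phi (flat L) x"

definition flat_coalesced :: "(nat \<times> nat) list \<Rightarrow> bool" where
  "flat_coalesced sd \<longleftrightarrow>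
     (\<forall>i<length sd. fst (sd ! i) \<noteq> 1) \<and>
     (\<forall>i. i + 1 < length sd \<longrightarrow> fst (sd ! i) * snd (sd ! i) \<noteq> snd (sd ! (i + 1)))"

fun is_leaf :: "'a nt \<Rightarrow> bool" where
  "is_leaf (Leaf _) = True"
| "is_leaf (Node _) = False"

definition coalesced :: "layout \<Rightarrow> bool" where
  "coalesced L \<longleftrightarrow>
     L = Leaf (1, 0)
   \<or> (\<exists>s d. L = Leaf (s, d) \<and> 1 < s)
   \<or> (\<exists>xs. L = Node xs \<and> (\<forall>x \<in> set xs. is_leaf x) \<and> 1 < length xs
          \<and> flat_coalesced (flat L))"

fun refines :: "nat nt \<Rightarrow> nat nt \<Rightarrow> bool" where
  "refines X' (Leaf n) \<longleftrightarrow> nt_size X' = n"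
| "refines (Leaf _) (Node _) \<longleftrightarrow> False"
| "refines (Node ys) (Node xs) \<longleftrightarrow>
     list_all2 refines ys xs"

text \<open>Relative modes of a layout C over S (meaningful when shape C refines S):
  the i-th entry is the part of C replacing the i-th leaf of S.\<close>
function (sequential) rel_modes :: "nat nt \<Rightarrow> layout \<Rightarrow> layout list" where
  "rel_modes (Leaf n) C = [C]"
| "rel_modes (Node xs) (Node ys) = concat (map (\<lambda>(x, y). rel_modes x y) (zip xs ys))"
| "rel_modes (Node xs) (Leaf _) = []"
  by pat_completeness auto
termination
  by (relation "measure (\<lambda>(x, y). size x)")
     (auto dest!: set_zip_leftD simp: less_Suc_eq_le intro: size_list_estimation')

definition coalesced_over :: "layout \<Rightarrow> nat nt \<Rightarrow> bool" where
  "coalesced_over C S \<longleftrightarrow> (\<forall>M \<in> set (rel_modes S C). coalesced M)"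

definition is_composite :: "layout \<Rightarrow> layout \<Rightarrow> layout \<Rightarrow> bool" where
  "is_composite B A C \<longleftrightarrow>
     is_layout C
   \<and> refines (shape C) (shape A)
   \<and> coalesced_over C (shape A)
   \<and> (\<forall>x < lsize A. phi A x < lsize B)
   \<and> (\<forall>x < lsize A. phi C x = phi B (phi A x))"

definition composite :: "layout \<Rightarrow> layout \<Rightarrow> layout" (infixl "\<circ>\<^sub>L" 55) where
  "B \<circ>\<^sub>L A = (THE C. is_composite B A C)"

text \<open>A pointed map from <len S>_* to <len T>_* is encoded as alpha :: nat => nat option
  on 1-based indices, with None playing the role of the base point *.\<close>
definition is_morphism :: "nat nt \<Rightarrow> nat nt \<Rightarrow> (nat \<Rightarrow> nat option) \<Rightarrow> bool" where
  "is_morphism S T \<alpha> \<longleftrightarrow>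
     pos_nt S \<and> pos_nt T
   \<and> (\<forall>i. \<alpha> i \<noteq> None \<longrightarrow> i \<in> {1..len S})
   \<and> (\<forall>i \<in> {1..len S}. \<forall>j. \<alpha> i = Some j \<longrightarrow> j \<in> {1..len T} \<and> entry i S = entry j T)
   \<and> (\<forall>i i' j. \<alpha> i = Some j \<and> \<alpha> i' = Some j \<longrightarrow> i = i')"

definition comp_pm :: "(nat \<Rightarrow> nat option) \<Rightarrow> (nat \<Rightarrow> nat option) \<Rightarrow> (nat \<Rightarrow> nat option)" where
  "comp_pm \<beta> \<alpha> = (\<lambda>i. case \<alpha> i of None \<Rightarrow> None | Some j \<Rightarrow> \<beta> j)"

definition non_degenerate :: "nat nt \<Rightarrow> (nat \<Rightarrow> nat option) \<Rightarrow> bool" where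
  "non_degenerate S \<alpha> \<longleftrightarrow> (\<forall>i \<in> {1..len S}. entry i S = 1 \<longrightarrow> \<alpha> i = None)"

fun index_nt :: "nat \<Rightarrow> 'a nt \<Rightarrow> (nat \<times> 'a) nt"
and index_list :: "nat \<Rightarrow> 'a nt list \<Rightarrow> (nat \<times> 'a) nt list" where
  "index_nt k (Leaf a) = Leaf (k, a)"
| "index_nt k (Node xs) = Node (index_list k xs)"
| "index_list k [] = []"
| "index_list k (x # xs) = index_nt k x # index_list (k + length (flat x)) xs"

definition L_mor :: "nat nt \<Rightarrow> nat nt \<Rightarrow> (nat \<Rightarrow> nat option) \<Rightarrow> layout" where
  "L_mor S T \<alpha> =
     map_nt (\<lambda>(i, s). (s, case \<alpha> i of None \<Rightarrow> 0
                                     | Some j \<Rightarrow> prod_list (take (j - 1) (flat T))))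
            (index_nt 1 S)"

end

theory Submission
  imports Defs
begin


lemma flat_map_nt: "flat (map_nt f X) = map f (flat X)"
proof (induction X)
  case (Node xs)
  have eq: "map (flat \<circ> map_nt f) xs = map (map f \<circ> flat) xs"
    by (rule map_cong) (use Node in auto)
  show ?case by (simp add: map_concat eq)
qed simp

lemma flat_index:
  "flat (index_nt k (X::'a nt)) = zip [k..<k + length (flat X)] (flat X)"
  "concat (map flat (index_list k (xs::'a nt list))) = zip [k..<k + length (concat (map flat xs))] (concat (map flat xs))"
proof (induction k X and k xs rule: index_nt_index_list.induct)
  case (4 k x xs)
  have u: "[k..<k + (length (flat x) + length (concat (map flat xs)))] =
    [k..<k + length (flat x)] @ [k + length (flat x)..<k + (length (flat x) + length (concat (map flat xs)))]"
    using upt_add_eq_append[of k "k + length (flat x)" "length (concat (map flat xs))"]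
    by (simp add: add.assoc)
  show ?case using 4
    by (simp add: u zip_append add.assoc)
qed auto

lemma snd_index:
  "map_nt snd (index_nt k (X::'a nt)) = X"
  "map (map_nt snd) (index_list k (xs::'a nt list)) = xs"
  by (induction k X and k xs rule: index_nt_index_list.induct) auto

definition str :: "(nat \<Rightarrow> nat option) \<Rightarrow> nat nt \<Rightarrow> nat \<Rightarrow> nat" where
  "str \<alpha> T i = (case \<alpha> i of None \<Rightarrow> 0 | Some j \<Rightarrow> prod_list (take (j - 1) (flat T)))"

lemma flat_L: "flat (L_mor S T \<alpha>) = map (\<lambda>p. (flat S ! p, str \<alpha> T (Suc p))) [0..<len S]"
proof -
  have "flat (L_mor S T \<alpha>) = map (\<lambda>(i, s). (s, str \<alpha> T i)) (zip [1..<1 + len S] (flat S))"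
    unfolding L_mor_def flat_map_nt flat_index len_def str_def by simp
  also have "\<dots> = map (\<lambda>p. (flat S ! p, str \<alpha> T (Suc p))) [0..<len S]"
    by (rule nth_equalityI) (auto simp: len_def nth_upt simp del: upt_Suc)
  finally show ?thesis .
qed

lemma shape_L: "shape (L_mor S T \<alpha>) = S"
proof -
  have "shape (L_mor S T \<alpha>) = map_nt snd (index_nt 1 S)"
    unfolding shape_def L_mor_def nt.map_comp
    by (rule nt.map_cong) auto
  then show ?thesis by (simp add: snd_index)
qed

lemma flat_phi_Nil[simp]: "flat_phi [] x = 0"
  by (simp add: flat_phi_def)

lemma flat_phi_Cons[simp]: "flat_phi ((s, d) # xs) x = x mod s * d + flat_phi xs (x div s)"
  unfolding flat_phi_def
  by (simp add: sum.lessThan_Suc_shift div_mult2_eq del: sum.lessThan_Suc)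

lemma flat_phi_0[simp]: "flat_phi xs 0 = 0"
  by (simp add: flat_phi_def)

lemma flat_phi_append:
  "flat_phi (xs @ ys) x = flat_phi xs x + flat_phi ys (x div prod_list (map fst xs))"
  by (induction xs arbitrary: x) (auto simp: div_mult2_eq)

lemma flat_phi_mod:
  "flat_phi xs x = flat_phi xs (x mod prod_list (map fst xs))"
proof (induction xs arbitrary: x)
  case (Cons a xs)
  obtain s d where a: "a = (s, d)" by fastforce
  have "x mod (s * prod_list (map fst xs)) mod s = x mod s"
    by (simp add: mod_mult2_eq)
  moreover have "x mod (s * prod_list (map fst xs)) div s = (x div s) mod prod_list (map fst xs)"
    by (cases "s = 0") (simp_all add: mod_mult2_eq)
  ultimately show ?case using Cons[of "x div s"] Cons[of "x mod (s * prod_list (map fst xs)) div s"] a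
    by simp
qed simp



lemma phi_L: "phi (L_mor S T \<alpha>) x =
  (\<Sum>p<len S. (x div prod_list (take p (flat S)) mod flat S ! p) * str \<alpha> T (Suc p))"
proof -
  have m: "map fst (flat (L_mor S T \<alpha>)) = flat S"
    unfolding flat_L by (rule nth_equalityI) (auto simp: len_def)
  show ?thesis
    unfolding phi_def flat_phi_def m
    by (rule sum.cong) (auto simp: flat_L)
qed

lemma digit:
  "\<forall>q<length (t::nat list). c q < t ! q \<Longrightarrow> k < length t \<Longrightarrow>
   (\<Sum>q<length t. c q * prod_list (take q t)) div prod_list (take k t) mod t ! k = c k"
proof (induction t arbitrary: c k)
  case (Cons s t)
  define V where "V = (\<Sum>q<length t. c (Suc q) * prod_list (take q t))"
  have sum: "(\<Sum>q<length (s # t). c q * prod_list (take q (s # t))) = c 0 + s * V"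
  proof -
    have "s * V = (\<Sum>q<length t. c (Suc q) * (s * prod_list (take q t)))"
      unfolding V_def sum_distrib_left by (rule sum.cong) auto
    then show ?thesis by (simp add: sum.lessThan_Suc_shift del: sum.lessThan_Suc)
  qed
  have c0: "c 0 < s" using Cons.prems by auto
  show ?case
  proof (cases k)
    case 0
    then show ?thesis using c0 unfolding sum by simp
  next
    case (Suc k')
    have d: "(c 0 + s * V) div s = V" using c0 by simp
    have "\<forall>q<length t. (\<lambda>q. c (Suc q)) q < t ! q" using Cons.prems by auto
    from Cons.IH[OF this, of k'] Cons.prems Suc
    have IH': "V div prod_list (take k' t) mod t ! k' = c (Suc k')" unfolding V_def by simp
    show ?thesis unfolding sum Suc take_Suc_Cons prod_list.Cons div_mult2_eq d nth_Cons_Suc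
      by (rule IH')
  qed
qed simp

lemma val_bound:
  "\<forall>q<length (t::nat list). c q < t ! q \<Longrightarrow> (\<Sum>q<length t. c q * prod_list (take q t)) < prod_list t"
proof (induction t arbitrary: c)
  case (Cons s t)
  define V where "V = (\<Sum>q<length t. c (Suc q) * prod_list (take q t))"
  have sum: "(\<Sum>q<length (s # t). c q * prod_list (take q (s # t))) = c 0 + s * V"
  proof -
    have "s * V = (\<Sum>q<length t. c (Suc q) * (s * prod_list (take q t)))"
      unfolding V_def sum_distrib_left by (rule sum.cong) auto
    then show ?thesis by (simp add: sum.lessThan_Suc_shift del: sum.lessThan_Suc)
  qed
  have c0: "c 0 < s" using Cons.prems by auto
  have "\<forall>q<length t. (\<lambda>q. c (Suc q)) q < t ! q" using Cons.prems by auto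
  from Cons.IH[OF this] have "V + 1 \<le> prod_list t" unfolding V_def by simp
  then have h: "s * (V + 1) \<le> s * prod_list t" by (rule mult_le_mono2)
  have "c 0 + s * V < s * (V + 1)" using c0 by simp
  with h show ?case unfolding sum by simp
qed simp

lemma swap_sum:
  assumes "\<And>p j. p < n \<Longrightarrow> \<alpha> (Suc p) = Some j \<Longrightarrow> 1 \<le> j \<and> j \<le> m"
  shows "(\<Sum>q<m. (\<Sum>p<n. if \<alpha> (Suc p) = Some (Suc q) then (a p::nat) else 0) * (h q::nat)) =
         (\<Sum>p<n. case \<alpha> (Suc p) of None \<Rightarrow> 0 | Some j \<Rightarrow> a p * h (j - 1))"
proof -
  have "(\<Sum>q<m. (\<Sum>p<n. if \<alpha> (Suc p) = Some (Suc q) then a p else 0) * h q) =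
        (\<Sum>q<m. \<Sum>p<n. if \<alpha> (Suc p) = Some (Suc q) then a p * h q else 0)"
    unfolding sum_distrib_right by (rule sum.cong, simp, rule sum.cong, simp, simp)
  also have "\<dots> = (\<Sum>p<n. \<Sum>q<m. if \<alpha> (Suc p) = Some (Suc q) then a p * h q else 0)"
    by (rule sum.swap)
  also have "\<dots> = (\<Sum>p<n. case \<alpha> (Suc p) of None \<Rightarrow> 0 | Some j \<Rightarrow> a p * h (j - 1))"
  proof (rule sum.cong)
    fix p assume p: "p \<in> {..<n}"
    show "(\<Sum>q<m. if \<alpha> (Suc p) = Some (Suc q) then a p * h q else 0) =
          (case \<alpha> (Suc p) of None \<Rightarrow> 0 | Some j \<Rightarrow> a p * h (j - 1))"
    proof (cases "\<alpha> (Suc p)")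
      case (Some j)
      with assms p have j: "1 \<le> j" "j \<le> m" by auto
      have "j - 1 < m" using j by simp
      have "(\<Sum>q<m. if \<alpha> (Suc p) = Some (Suc q) then a p * h q else 0) =
            (\<Sum>q<m. if q = j - 1 then a p * h q else 0)"
        by (rule sum.cong) (use Some j in auto)
      also have "\<dots> = a p * h (j - 1)" using \<open>j - 1 < m\<close> by (simp add: sum.delta')
      finally show ?thesis using Some by simp
    qed simp
  qed simp
  finally show ?thesis .
qed



lemma mor_facts:
  assumes "is_morphism S T \<alpha>" "p < len S" "\<alpha> (Suc p) = Some j"
  shows "1 \<le> j \<and> j \<le> len T \<and> flat S ! p = flat T ! (j - 1)"
proof -
  have i: "Suc p \<in> {1..len S}" using assms(2) by simp
  have "\<forall>i \<in> {1..len S}. \<forall>j. \<alpha> i = Some j \<longrightarrow> j \<in> {1..len T} \<and> entry i S = entry j T"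
    using assms(1) unfolding is_morphism_def by blast
  then have "j \<in> {1..len T} \<and> entry (Suc p) S = entry j T" using i assms(3) by blast
  then show ?thesis unfolding entry_def by simp
qed

lemma mor_inj:
  assumes "is_morphism S T \<alpha>" "\<alpha> i = Some j" "\<alpha> i' = Some j"
  shows "i = i'"
  using assms unfolding is_morphism_def by blast

lemma pos_entry: "pos_nt S \<Longrightarrow> q < len S \<Longrightarrow> 0 < flat S ! q"
  unfolding pos_nt_def len_def by auto

lemma refines_refl: "refines X X"
proof (induction X)
  case (Node xs)
  then show ?case by (auto intro: list.rel_refl_strong)
qed (simp add: nt_size_def)

lemma rel_modes_self: "rel_modes (shape C) C = map Leaf (flat C)"
proof (induction C)
  case (Leaf a)
  then show ?case by (cases a) (simp add: shape_def)
next
  case (Node ys)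
  have "zip (map (map_nt fst) ys) ys = map (\<lambda>y. (shape y, y)) ys"
    by (induction ys) (auto simp: shape_def)
  then have "rel_modes (shape (Node ys)) (Node ys) = concat (map (\<lambda>y. rel_modes (shape y) y) ys)"
    by (simp add: shape_def comp_def)
  also have "\<dots> = concat (map (\<lambda>y. map Leaf (flat y)) ys)"
    using Node by (intro arg_cong[where f=concat] map_cong) auto
  also have "\<dots> = map Leaf (flat (Node ys))"
    by (simp add: map_concat comp_def)
  finally show ?case .
qed

context
  fixes S T U :: "nat nt" and \<alpha> \<beta> :: "nat \<Rightarrow> nat option" and x :: nat
  assumes mS: "is_morphism S T \<alpha>" and mT: "is_morphism T U \<beta>"
begin

definition "dig p = x div prod_list (take p (flat S)) mod flat S ! p"
definition "cc q = (\<Sum>p<len S. if \<alpha> (Suc p) = Some (Suc q) then dig p else 0)"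

lemma facts_range: "\<And>p j. p < len S \<Longrightarrow> \<alpha> (Suc p) = Some j \<Longrightarrow> 1 \<le> j \<and> j \<le> len T"
  using mor_facts[OF mS] by blast

lemma phiA: "phi (L_mor S T \<alpha>) x = (\<Sum>q<len T. cc q * prod_list (take q (flat T)))"
proof -
  have "phi (L_mor S T \<alpha>) x = (\<Sum>p<len S. dig p * str \<alpha> T (Suc p))"
    unfolding phi_L dig_def ..
  also have "\<dots> = (\<Sum>p<len S. case \<alpha> (Suc p) of None \<Rightarrow> 0 | Some j \<Rightarrow> dig p * prod_list (take (j - 1) (flat T)))"
    by (rule sum.cong) (auto simp: str_def split: option.split)
  also have "\<dots> = (\<Sum>q<len T. cc q * prod_list (take q (flat T)))"
    unfolding cc_def using swap_sum[OF facts_range, where a=dig and h="\<lambda>q. prod_list (take q (flat T))"] by simp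
  finally show ?thesis .
qed

lemma cc_bound: "q < len T \<Longrightarrow> cc q < flat T ! q"
proof -
  assume q: "q < len T"
  have "pos_nt T" using mT unfolding is_morphism_def by (rule conjE) (erule conjE)
  then have posT: "0 < flat T ! q" using q by (rule pos_entry)
  show ?thesis
  proof (cases "\<exists>p<len S. \<alpha> (Suc p) = Some (Suc q)")
    case True
    then obtain p where p: "p < len S" "\<alpha> (Suc p) = Some (Suc q)" by blast
    have "cc q = (\<Sum>p'<len S. if p' = p then dig p' else 0)"
      unfolding cc_def
    proof (rule sum.cong)
      fix p' assume "p' \<in> {..<len S}"
      show "(if \<alpha> (Suc p') = Some (Suc q) then dig p' else 0) = (if p' = p then dig p' else 0)"
      proof (cases "\<alpha> (Suc p') = Some (Suc q)")
        case True
        then have "Suc p' = Suc p" by (rule mor_inj[OF mS _ p(2)])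
        then show ?thesis using True by simp
      next
        case False
        have "p' \<noteq> p" using False \<open>\<alpha> (Suc p) = Some (Suc q)\<close> by auto
        then show ?thesis using False by simp
      qed
    qed simp
    also have "\<dots> = dig p" using p by (simp add: sum.delta')
    finally have "cc q = dig p" .
    moreover have "pos_nt S" using mS unfolding is_morphism_def by (rule conjE)
    then have "0 < flat S ! p" using p(1) by (rule pos_entry)
    moreover have "flat S ! p = flat T ! q" using mor_facts[OF mS p] by simp
    ultimately show ?thesis unfolding dig_def by simp
  next
    case False
    then have "cc q = 0" unfolding cc_def by (intro sum.neutral) auto
    then show ?thesis using posT by simp
  qed
qed

lemma phiA_bound: "phi (L_mor S T \<alpha>) x < prod_list (flat T)"
  unfolding phiA len_def using val_bound[of "flat T" cc] cc_bound unfolding len_def by blast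

lemma phiBA: "phi (L_mor T U \<beta>) (phi (L_mor S T \<alpha>) x) = phi (L_mor S U (comp_pm \<beta> \<alpha>)) x"
proof -
  have "phi (L_mor T U \<beta>) (phi (L_mor S T \<alpha>) x) =
    (\<Sum>q<len T. (\<Sum>q'<length (flat T). cc q' * prod_list (take q' (flat T))) div prod_list (take q (flat T)) mod flat T ! q * str \<beta> U (Suc q))"
    unfolding phiA unfolding phi_L len_def ..
  also have "\<dots> = (\<Sum>q<len T. cc q * str \<beta> U (Suc q))"
    by (rule sum.cong) (auto simp: digit cc_bound len_def)
  also have "\<dots> = (\<Sum>p<len S. case \<alpha> (Suc p) of None \<Rightarrow> 0 | Some j \<Rightarrow> dig p * str \<beta> U (Suc (j - 1)))"
    unfolding cc_def using swap_sum[OF facts_range, where a=dig and h="\<lambda>q. str \<beta> U (Suc q)"] by simp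
  also have "\<dots> = (\<Sum>p<len S. dig p * str (comp_pm \<beta> \<alpha>) U (Suc p))"
  proof (rule sum.cong)
    fix p assume p: "p \<in> {..<len S}"
    show "(case \<alpha> (Suc p) of None \<Rightarrow> 0 | Some j \<Rightarrow> dig p * str \<beta> U (Suc (j - 1))) =
          dig p * str (comp_pm \<beta> \<alpha>) U (Suc p)"
    proof (cases "\<alpha> (Suc p)")
      case (Some j)
      then have "1 \<le> j" using facts_range p by auto
      then show ?thesis using Some by (simp add: str_def comp_pm_def)
    qed (simp add: str_def comp_pm_def)
  qed simp
  also have "\<dots> = phi (L_mor S U (comp_pm \<beta> \<alpha>)) x"
    unfolding phi_L dig_def ..
  finally show ?thesis .
qed

end



lemma prod_list_concat: "prod_list (concat xss) = prod_list (map prod_list (xss :: nat list list))"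
  by (induction xss) auto

lemma nt_size_shape: "nt_size (shape M) = prod_list (map fst (flat M))"
  by (simp add: nt_size_def shape_def flat_map_nt)

lemma shape_eq: "shape = map_nt fst"
  by (rule ext) (simp add: shape_def)

lemma prod_pos: "\<forall>a\<in>set xs. 0 < (a::nat) \<Longrightarrow> 0 < prod_list xs"
  by (induction xs) auto

lemma all2_zip: "list_all2 R ys xs \<Longrightarrow> (x, y) \<in> set (zip xs ys) \<Longrightarrow> R y x"
  by (auto simp: list_all2_conv_all_nth in_set_zip)

lemma cc_helper: "concat (map (\<lambda>(x, y). concat (map flat (g x y))) Z) = concat (map flat (concat (map (\<lambda>(x, y). g x y) Z)))"
  by (induction Z) auto

lemma cc_helper2: "map h (concat (map (\<lambda>(x, y). g x y) Z)) = concat (map (\<lambda>(x, y). map h (g x y)) Z)"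
  by (induction Z) auto

lemma U1:
  "refines (shape C) S \<Longrightarrow>
   flat C = concat (map flat (rel_modes S C)) \<and> map (\<lambda>M. nt_size (shape M)) (rel_modes S C) = flat S"
proof (induction S C rule: rel_modes.induct)
  case (1 n C)
  then show ?case by simp
next
  case (2 xs ys)
  have R: "list_all2 refines (map shape ys) xs" using 2(2) by (simp add: shape_eq)
  then have len: "length xs = length ys" by (auto dest: list_all2_lengthD)
  have R': "list_all2 (\<lambda>y x. refines (shape y) x) ys xs" using R by (simp add: list.rel_map)
  have IH: "\<And>x y. (x, y) \<in> set (zip xs ys) \<Longrightarrow>
      flat y = concat (map flat (rel_modes x y)) \<and> map (\<lambda>M. nt_size (shape M)) (rel_modes x y) = flat x"
    using 2(1) all2_zip[OF R'] by blast
  have "flat (Node ys) = concat (map flat (map snd (zip xs ys)))" using len by simp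
  also have "\<dots> = concat (map (\<lambda>(x, y). concat (map flat (rel_modes x y))) (zip xs ys))"
    by (simp add: comp_def) (rule arg_cong[where f = concat], rule map_cong, simp, use IH in auto)
  also have "\<dots> = concat (map flat (rel_modes (Node xs) (Node ys)))"
    by (simp add: cc_helper)
  finally have A: "flat (Node ys) = concat (map flat (rel_modes (Node xs) (Node ys)))" .
  have "map (\<lambda>M. nt_size (shape M)) (rel_modes (Node xs) (Node ys)) =
        concat (map (\<lambda>(x, y). map (\<lambda>M. nt_size (shape M)) (rel_modes x y)) (zip xs ys))"
    by (simp add: cc_helper2)
  also have "\<dots> = concat (map (\<lambda>(x, y). flat x) (zip xs ys))"
    by (rule arg_cong[where f = concat], rule map_cong, simp, use IH in auto)
  also have "\<dots> = concat (map flat (map fst (zip xs ys)))"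
    unfolding map_map by (rule arg_cong[where f = concat], rule map_cong) auto
  also have "\<dots> = flat (Node xs)" using len by simp
  finally show ?case using A by simp
next
  case (3 xs uu)
  then show ?case by (simp add: shape_def)
qed

lemma U2:
  "refines (shape C) S \<Longrightarrow> (\<forall>M \<in> set (rel_modes S C). is_leaf M) \<Longrightarrow> shape C = S"
proof (induction S C rule: rel_modes.induct)
  case (1 n C)
  then show ?case by (cases C) (auto simp: shape_def nt_size_def)
next
  case (2 xs ys)
  have R: "list_all2 refines (map shape ys) xs" using 2(2) by (simp add: shape_eq)
  then have len: "length xs = length ys" by (auto dest: list_all2_lengthD)
  have R': "list_all2 (\<lambda>y x. refines (shape y) x) ys xs" using R by (simp add: list.rel_map)
  have "map shape ys = xs"
  proof (rule nth_equalityI)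
    show "length (map shape ys) = length xs" using len by simp
    fix i assume i: "i < length (map shape ys)"
    then have z: "(xs ! i, ys ! i) \<in> set (zip xs ys)" using len by (auto simp: in_set_zip)
    have "\<forall>M \<in> set (rel_modes (xs ! i) (ys ! i)). is_leaf M"
      using 2(3) z by auto
    then show "map shape ys ! i = xs ! i"
      using 2(1)[OF z] all2_zip[OF R' z] i by simp
  qed
  then show ?case by (simp add: shape_eq)
next
  case (3 xs uu)
  then show ?case by (simp add: shape_def)
qed

lemma U3: "shape X = shape Y \<Longrightarrow> flat X = flat Y \<Longrightarrow> X = Y"
proof (induction X arbitrary: Y)
  case (Leaf a)
  then show ?case by (cases Y) (auto simp: shape_def)
next
  case (Node xs)
  then obtain ys where Y: "Y = Node ys" by (cases Y) (auto simp: shape_def)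
  have sh: "map shape xs = map shape ys" using Node.prems Y by (simp add: shape_eq)
  then have len: "length xs = length ys" using map_eq_imp_length_eq by blast
  have lf: "length (flat x) = length (flat (shape x))" for x
    by (simp add: shape_def flat_map_nt)
  have "map flat xs = map flat ys"
  proof (rule concat_injective)
    show "concat (map flat xs) = concat (map flat ys)" using Node.prems Y by simp
    show "length (map flat xs) = length (map flat ys)" using len by simp
    show "\<forall>(x, y) \<in> set (zip (map flat xs) (map flat ys)). length x = length y"
    proof (clarsimp simp: in_set_zip)
      fix n assume n: "n < length xs" "n < length ys"
      have "map shape xs ! n = map shape ys ! n" using sh by simp
      then have "shape (xs ! n) = shape (ys ! n)" using n by simp
      then show "length (flat (xs ! n)) = length (flat (ys ! n))" using lf[of "xs ! n"] lf[of "ys ! n"] by simp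
    qed
  qed
  have "xs = ys"
  proof (rule nth_equalityI)
    show "length xs = length ys" by (rule len)
    fix i assume i: "i < length xs"
    have "map shape xs ! i = map shape ys ! i" using sh by simp
    then have a: "shape (xs ! i) = shape (ys ! i)" using i len by simp
    have "map flat xs ! i = map flat ys ! i" using \<open>map flat xs = map flat ys\<close> by simp
    then have b: "flat (xs ! i) = flat (ys ! i)" using i len by simp
    show "xs ! i = ys ! i"
      using Node.IH[OF nth_mem[OF i] a b] .
  qed
  then show ?case using Y by simp
qed

lemma flat_leaves: "\<forall>x\<in>set xs. is_leaf x \<Longrightarrow> length (concat (map flat xs)) = length xs"
proof (induction xs)
  case (Cons x xs)
  then show ?case by (cases x) auto
qed simp

lemma mode_unique:
  assumes co: "coalesced M" and pos: "pos_nt (shape M)" and sz: "nt_size (shape M) = s"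
    and ph: "\<forall>y<s. phi M y = y * d" and s1: "s = 1 \<Longrightarrow> d = 0"
  shows "M = Leaf (s, d)"
proof -
  consider "M = Leaf (1, 0)" | s' d' where "M = Leaf (s', d')" "1 < s'"
    | xs where "M = Node xs" "\<forall>x \<in> set xs. is_leaf x" "1 < length xs" "flat_coalesced (flat M)"
    using co unfolding coalesced_def by blast
  then show ?thesis
  proof cases
    case 1
    then show ?thesis using sz s1 by (simp add: shape_def nt_size_def)
  next
    case 2
    then have "s = s'" using sz by (simp add: shape_def nt_size_def)
    then have "phi M 1 = d" using ph 2 by simp
    then show ?thesis using 2 \<open>s = s'\<close> by (simp add: phi_def)
  next
    case 3
    have "length (flat M) = length xs" using 3 flat_leaves by simp
    then have len2: "2 \<le> length (flat M)" using 3(3) by simp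
    obtain u1 l where ul: "flat M = u1 # l" using len2 by (cases "flat M") auto
    obtain u2 rest where ur: "l = u2 # rest" using len2 ul by (cases l) auto
    obtain a1 e1 where u1: "u1 = (a1, e1)" by (cases u1)
    obtain a2 e2 where u2: "u2 = (a2, e2)" by (cases u2)
    have fl: "flat M = (a1, e1) # (a2, e2) # rest" using ul ur u1 u2 by simp
    have fc: "a1 \<noteq> 1" "a2 \<noteq> 1" "a1 * e1 \<noteq> e2"
      using 3(4) unfolding flat_coalesced_def fl by (auto dest: spec[of _ 0] spec[of _ 1])
    have pf: "\<forall>a\<in>set (map fst (flat M)). 0 < a"
      using pos unfolding pos_nt_def shape_def flat_map_nt .
    then have p: "0 < a1" "0 < a2" "0 < prod_list (map fst rest)"
      unfolding fl by (auto intro!: prod_pos)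
    have a1: "2 \<le> a1" "2 \<le> a2" using p fc by auto
    have s: "s = a1 * (a2 * prod_list (map fst rest))"
      using sz unfolding nt_size_shape fl by simp
    have "2 * 1 \<le> a2 * prod_list (map fst rest)"
      using mult_le_mono[of 2 a2 1 "prod_list (map fst rest)"] a1(2) p(3) by simp
    then have "a1 * 2 \<le> a1 * (a2 * prod_list (map fst rest))"
      by (intro mult_le_mono2) simp
    then have lt: "1 < s" "a1 < s" using a1 s by linarith+
    have e1: "phi M 1 = e1" unfolding phi_def fl using a1 by simp
    have e2: "phi M a1 = e2" unfolding phi_def fl using a1 by simp
    have "e1 = d" using ph lt e1 by simp
    moreover have "e2 = a1 * d" using ph lt e2 by simp
    ultimately show ?thesis using fc by simp
  qed
qed



lemma prod_fst_concat: "prod_list (map fst (concat (map flat Ms))) = prod_list (map (\<lambda>M. nt_size (shape M)) Ms)"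
  by (induction Ms) (auto simp: nt_size_shape)

lemma phi_piece:
  assumes fl: "flat L = concat (map flat Ms)" and sz: "map (\<lambda>M. nt_size (shape M)) Ms = sS"
    and pos: "\<forall>a\<in>set sS. 0 < a" and p: "p < length Ms" and y: "y < sS ! p"
  shows "phi L (y * prod_list (take p sS)) = phi (Ms ! p) y"
proof -
  define F1 where "F1 = concat (map flat (take p Ms))"
  define F3 where "F3 = concat (map flat (drop (Suc p) Ms))"
  have "Ms = take p Ms @ Ms ! p # drop (Suc p) Ms" using p by (simp add: id_take_nth_drop)
  then have "flat L = F1 @ flat (Ms ! p) @ F3" unfolding fl F1_def F3_def
    by (metis concat.simps(2) concat_append list.simps(9) map_append)
  moreover have P1: "prod_list (map fst F1) = prod_list (take p sS)"
    unfolding F1_def prod_fst_concat using sz by (metis take_map)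
  moreover have P2: "prod_list (map fst (flat (Ms ! p))) = sS ! p"
    using sz p by (metis nt_size_shape nth_map)
  moreover have "0 < prod_list (take p sS)" using pos
    by (intro prod_pos) (auto dest: in_set_takeD)
  ultimately show ?thesis
    unfolding phi_def using y
    by (simp add: flat_phi_append flat_phi_mod[of F1])
qed

lemma prod_bound:
  assumes "\<forall>a\<in>set sS. 0 < (a::nat)" "p < length sS" "y < sS ! p"
  shows "y * prod_list (take p sS) < prod_list sS"
proof -
  have e: "prod_list sS = prod_list (take p sS) * (sS ! p * prod_list (drop (Suc p) sS))"
    using assms(2) by (metis id_take_nth_drop prod_list.append prod_list.Cons)
  have "0 < prod_list (drop (Suc p) sS)" using assms(1)
    by (intro prod_pos) (auto dest: in_set_dropD)
  moreover have "0 < prod_list (take p sS)" using assms(1)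
    by (intro prod_pos) (auto dest: in_set_takeD)
  ultimately have "y * prod_list (take p sS) < sS ! p * prod_list (take p sS)"
    using assms(3) by simp
  also have "\<dots> \<le> prod_list sS" unfolding e using \<open>0 < prod_list (drop (Suc p) sS)\<close>
    by simp
  finally show ?thesis .
qed

lemma unique:
  assumes posS: "pos_nt S"
    and deg: "\<And>p. p < len S \<Longrightarrow> flat S ! p = 1 \<Longrightarrow> str \<gamma> U (Suc p) = 0"
    and lay: "is_layout C'" and ref: "refines (shape C') S" and co: "coalesced_over C' S"
    and ph: "\<forall>x<prod_list (flat S). phi C' x = phi (L_mor S U \<gamma>) x"
  shows "C' = L_mor S U \<gamma>"
proof -
  define C where "C = L_mor S U \<gamma>"
  define Ms where "Ms = rel_modes S C'"
  have u1: "flat C' = concat (map flat Ms)" "map (\<lambda>M. nt_size (shape M)) Ms = flat S"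
    using U1[OF ref] unfolding Ms_def by auto
  have lenM: "length Ms = len S" using u1(2) unfolding len_def by (metis length_map)
  have pos: "\<forall>a\<in>set (flat S). 0 < a" using posS unfolding pos_nt_def .
  have flC: "flat C = map (\<lambda>p. (flat S ! p, str \<gamma> U (Suc p))) [0..<len S]"
    unfolding C_def by (rule flat_L)
  have cl: "\<And>xs::(nat \<times> nat) list. xs = concat (map flat (map Leaf xs))"
    by (induct_tac xs) auto
  have c1: "flat C = concat (map flat (map Leaf (flat C)))" by (rule cl)
  have c2: "map (\<lambda>M. nt_size (shape M)) (map Leaf (flat C)) = flat S"
    unfolding flC by (rule nth_equalityI) (auto simp: len_def shape_def nt_size_def)
  have posC': "\<forall>a\<in>set (map fst (flat C')). 0 < a"
    using lay unfolding is_layout_def pos_nt_def shape_def flat_map_nt .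
  have Ms_eq: "Ms = map Leaf (flat C)"
  proof (rule nth_equalityI)
    show "length Ms = length (map Leaf (flat C))" using lenM flC by simp
    fix p assume "p < length Ms"
    then have p: "p < len S" using lenM by simp
    have M: "Ms ! p \<in> set Ms" using p lenM by simp
    have "Ms ! p = Leaf (flat S ! p, str \<gamma> U (Suc p))"
    proof (rule mode_unique)
      show "coalesced (Ms ! p)" using co M unfolding coalesced_over_def Ms_def by blast
      have "set (map fst (flat (Ms ! p))) \<subseteq> set (map fst (flat C'))"
        using M u1(1) by auto
      then show "pos_nt (shape (Ms ! p))"
        using posC' unfolding pos_nt_def shape_def flat_map_nt by blast
      show "nt_size (shape (Ms ! p)) = flat S ! p" using u1(2) p lenM by (metis nth_map)
      show "flat S ! p = 1 \<Longrightarrow> str \<gamma> U (Suc p) = 0" using deg p by blast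
      show "\<forall>y<flat S ! p. phi (Ms ! p) y = y * str \<gamma> U (Suc p)"
      proof (intro allI impI)
        fix y assume y: "y < flat S ! p"
        have "phi (Ms ! p) y = phi C' (y * prod_list (take p (flat S)))"
          using phi_piece[OF u1 pos _ y] p lenM by simp
        also have "\<dots> = phi C (y * prod_list (take p (flat S)))"
          using ph prod_bound[OF pos _ y] p unfolding C_def len_def by simp
        also have "\<dots> = phi (map Leaf (flat C) ! p) y"
          using phi_piece[OF c1 c2 pos _ y] p flC by simp
        also have "\<dots> = y * str \<gamma> U (Suc p)"
          using p y flC by (simp add: phi_def)
        finally show "phi (Ms ! p) y = y * str \<gamma> U (Suc p)" .
      qed
    qed
    then show "Ms ! p = map Leaf (flat C) ! p" using p flC by simp
  qed
  have "shape C' = S"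
    using U2[OF ref] Ms_eq unfolding Ms_def by auto
  moreover have "shape C = S" unfolding C_def by (rule shape_L)
  moreover have "flat C' = flat C" using u1(1) Ms_eq c1 by simp
  ultimately show ?thesis using U3 unfolding C_def by metis
qed


theorem mainTheorem2:
  fixes S T U :: "nat nt" and \<alpha> \<beta> :: "nat \<Rightarrow> nat option"
  assumes "is_morphism S T \<alpha>" and "is_morphism T U \<beta>"
    and "non_degenerate S \<alpha>" and "non_degenerate T \<beta>"
  shows "L_mor S U (comp_pm \<beta> \<alpha>) = L_mor T U \<beta> \<circ>\<^sub>L L_mor S T \<alpha>"
proof -
  note mS = assms(1) and mT = assms(2)
  define C where "C = L_mor S U (comp_pm \<beta> \<alpha>)"
  have posS: "pos_nt S" using mS unfolding is_morphism_def by (rule conjE)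
  have deg: "\<And>p. p < len S \<Longrightarrow> flat S ! p = 1 \<Longrightarrow> str (comp_pm \<beta> \<alpha>) U (Suc p) = 0"
    using assms(3) unfolding non_degenerate_def entry_def str_def comp_pm_def by auto
  have shA: "shape (L_mor S T \<alpha>) = S" by (rule shape_L)
  have lA: "lsize (L_mor S T \<alpha>) = prod_list (flat S)" by (simp add: lsize_def shA nt_size_def)
  have lB: "lsize (L_mor T U \<beta>) = prod_list (flat T)" by (simp add: lsize_def shape_L nt_size_def)
  have comp: "is_composite (L_mor T U \<beta>) (L_mor S T \<alpha>) C"
    unfolding is_composite_def
  proof (intro conjI allI impI)
    show "is_layout C" unfolding C_def is_layout_def shape_L by (rule posS)
    show "refines (shape C) (shape (L_mor S T \<alpha>))" unfolding C_def shape_L by (rule refines_refl)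
    show "coalesced_over C (shape (L_mor S T \<alpha>))"
      unfolding coalesced_over_def shA
    proof
      fix M assume "M \<in> set (rel_modes S C)"
      then have "M \<in> set (map Leaf (flat C))" using rel_modes_self[of C] unfolding C_def shape_L by simp
      then obtain p where p: "p < len S" "M = Leaf (flat S ! p, str (comp_pm \<beta> \<alpha>) U (Suc p))"
        unfolding C_def flat_L by auto
      have "0 < flat S ! p" using posS p pos_entry by blast
      then show "coalesced M" using deg[OF p(1)] p unfolding coalesced_def
        by (cases "flat S ! p = 1") auto
    qed
    fix x
    show "x < lsize (L_mor S T \<alpha>) \<Longrightarrow> phi (L_mor S T \<alpha>) x < lsize (L_mor T U \<beta>)"
      unfolding lB using phiA_bound[OF mS mT] by blast
    show "x < lsize (L_mor S T \<alpha>) \<Longrightarrow> phi C x = phi (L_mor T U \<beta>) (phi (L_mor S T \<alpha>) x)"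
      unfolding C_def using phiBA[OF mS mT] by metis
  qed
  have "(THE C'. is_composite (L_mor T U \<beta>) (L_mor S T \<alpha>) C') = C"
  proof (rule the_equality)
    show "is_composite (L_mor T U \<beta>) (L_mor S T \<alpha>) C" by (rule comp)
    fix C' assume c: "is_composite (L_mor T U \<beta>) (L_mor S T \<alpha>) C'"
    show "C' = C" unfolding C_def
    proof (rule unique[OF posS deg])
      show "is_layout C'" "refines (shape C') S" "coalesced_over C' S"
        using c unfolding is_composite_def shA by auto
      show "\<forall>x<prod_list (flat S). phi C' x = phi (L_mor S U (comp_pm \<beta> \<alpha>)) x"
        using c comp unfolding is_composite_def lA C_def by auto
    qed auto
  qed
  then show ?thesis unfolding composite_def C_def by simp
qed

end
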